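(* Fix a directed edge set $\mathcal{E}$ and a randomized design with $0<\mathbb{E}[z_i]<1$ for all $i$. Suppose the individually weighted linear estimator $\hat{\mathrm{est}}({\bf w},{\bf v})=\sum_i(w_iz_i+v_i(1-z_i))Y_i({\bf z})$ is unbiased for $\mathrm{ATE}$ under the heterogeneous additive network effects model with edge set $\mathcal{E}$, for every choice of real parameters $\alpha,\beta,\{\gamma_{ki}\}_{(k,i)\in\mathcal{E}}$. Then necessarily $w_i=\frac{1}{n\mathbb{E}[z_i]}$ and $v_i=-\frac1{n\mathbb{E}[1-z_i]}$, i.e. $\hat{\mathrm{est}}=\frac1n\sum_i\big(\frac{z_i}{\mathbb{E}[z_i]}-\frac{1-z_i}{\mathbb{E}[1-z_i]}\big)Y_i({\bf z})$, and $z_k$ and $z_i$ are independent for every $(k,i)\in\mathcal{E}$.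
   Context: Population $[n]$; random treatment vector ${\bf z}\in\{0,1\}^n$ drawn from a randomized design. Heterogeneous additive network effects model: $Y_i({\bf z})=\alpha_i+\beta_iz_i+\sum_{k\in[n]}\gamma_{ki}z_k$ with deterministic real parameters, $\gamma_{ki}=0$ unless $(k,i)\in\mathcal{E}$, where $\mathcal{E}$ is a set of ordered pairs $(k,i)$, $k\neq i$. Average (direct) treatment effect: $\mathrm{ATE}=\frac1n\sum_i(Y_i({\bf e}_i)-Y_i({\bf 0}))=\frac1n\sum_i\beta_i$, where ${\bf e}_i$ is the $i$-th standard basis vector. Individually weighted linear estimators have deterministic weights ${\bf w},{\bf v}$ not depending on ${\bf z}$. *)

theory Defs
  imports "HOL-Probability.Probability"
begin

text \<open>Population = the finite type 'n (so n = CARD('n)); a treatment vector is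
  z :: 'n \<Rightarrow> bool, with z i read as the indicator of treatment of unit i.
  A randomized design is a pmf on treatment vectors.\<close>

definition zind :: "bool \<Rightarrow> real" where
  "zind b = (if b then 1 else 0)"

definition HANE_outcome ::
  "('n::finite \<Rightarrow> real) \<Rightarrow> ('n \<Rightarrow> real) \<Rightarrow> ('n \<Rightarrow> 'n \<Rightarrow> real) \<Rightarrow> 'n \<Rightarrow> ('n \<Rightarrow> bool) \<Rightarrow> real" where
  "HANE_outcome \<alpha> \<beta> \<gamma> i z = \<alpha> i + \<beta> i * zind (z i) + (\<Sum>k\<in>UNIV. \<gamma> k i * zind (z k))"

definition ATE :: "('n::finite \<Rightarrow> ('n \<Rightarrow> bool) \<Rightarrow> real) \<Rightarrow> real" where
  "ATE Y = (1 / real CARD('n)) * (\<Sum>i\<in>UNIV. Y i (\<lambda>j. j = i) - Y i (\<lambda>_. False))"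

definition est :: "('n::finite \<Rightarrow> real) \<Rightarrow> ('n \<Rightarrow> real) \<Rightarrow> ('n \<Rightarrow> ('n \<Rightarrow> bool) \<Rightarrow> real) \<Rightarrow> ('n \<Rightarrow> bool) \<Rightarrow> real" where
  "est w v Y z = (\<Sum>i\<in>UNIV. (w i * zind (z i) + v i * (1 - zind (z i))) * Y i z)"

end

theory Submission imports Defs begin
lemma lin_indep:
  fixes f X Y :: "'a \<Rightarrow> real"
  assumes "finite S" "sum f S = 1" "(\<Sum>z\<in>S. X z * Y z * f z) = (\<Sum>z\<in>S. X z * f z) * (\<Sum>z\<in>S. Y z * f z)"
  shows "(\<Sum>z\<in>S. (c1 * X z + c0 * (1 - X z)) * (d1 * Y z + d0 * (1 - Y z)) * f z)
       = (\<Sum>z\<in>S. (c1 * X z + c0 * (1 - X z)) * f z) * (\<Sum>z\<in>S. (d1 * Y z + d0 * (1 - Y z)) * f z)"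
proof -
  define a where "a = (\<Sum>z\<in>S. X z * f z)"
  define b where "b = (\<Sum>z\<in>S. Y z * f z)"
  have e1: "(\<Sum>z\<in>S. (c1 * X z + c0 * (1 - X z)) * f z) = c1 * a + c0 * (1 - a)"
    using assms(2) by (simp add: a_def algebra_simps sum.distrib sum_subtractf sum_distrib_left[symmetric])
  have e2: "(\<Sum>z\<in>S. (d1 * Y z + d0 * (1 - Y z)) * f z) = d1 * b + d0 * (1 - b)"
    using assms(2) by (simp add: b_def algebra_simps sum.distrib sum_subtractf sum_distrib_left[symmetric])
  have e3: "(\<Sum>z\<in>S. (c1 * X z + c0 * (1 - X z)) * (d1 * Y z + d0 * (1 - Y z)) * f z)
     = c1*d1*(\<Sum>z\<in>S. X z * Y z * f z) + c1*d0*(a - (\<Sum>z\<in>S. X z * Y z * f z))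
       + c0*d1*(b - (\<Sum>z\<in>S. X z * Y z * f z)) + c0*d0*(1 - a - b + (\<Sum>z\<in>S. X z * Y z * f z))"
    using assms(2) by (simp add: a_def b_def algebra_simps sum.distrib sum_subtractf sum_distrib_left[symmetric])
  show ?thesis unfolding e1 e2 e3 assms(3) a_def[symmetric] b_def[symmetric] by (simp add: algebra_simps)
qed

lemma exp_sum: "measure_pmf.expectation (D :: ('n::finite \<Rightarrow> bool) pmf) g = (\<Sum>z\<in>UNIV. g z * pmf D z)"
  by (rule integral_measure_pmf_real) auto

lemma prob_sum: "measure_pmf.prob (D :: ('n::finite \<Rightarrow> bool) pmf) S = (\<Sum>z\<in>UNIV. of_bool (z \<in> S) * pmf D z)"
  by (simp add: measure_measure_pmf_finite sum.If_cases)

lemma ind_bool: "of_bool (b \<in> A) = of_bool (True \<in> A) * zind b + of_bool (False \<in> A) * (1 - zind b)"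
  by (cases b) (auto simp: zind_def)
lemma zind_sq: "zind b * zind b = zind b" "zind b * (1 - zind b) = 0" by (auto simp: zind_def)

lemma test:
  fixes D :: "('n::finite \<Rightarrow> bool) pmf"
    and \<E> :: "('n \<times> 'n) set"
    and w v :: "'n \<Rightarrow> real"
  assumes unbiased: "\<forall>\<alpha> \<beta> (\<gamma> :: 'n \<Rightarrow> 'n \<Rightarrow> real).
                    (\<forall>k i. (k, i) \<notin> \<E> \<longrightarrow> \<gamma> k i = 0) \<longrightarrow>
                    measure_pmf.expectation D (est w v (HANE_outcome \<alpha> \<beta> \<gamma>))
                      = ATE (HANE_outcome \<alpha> \<beta> \<gamma>)"
  shows "(\<Sum>z\<in>UNIV. (w j * zind (z j) + v j * (1 - zind (z j))) * pmf D z) = 0"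
    "(\<Sum>z\<in>UNIV. w j * zind (z j) * pmf D z) = 1 / real CARD('n)"
    "(k, i) \<in> \<E> \<Longrightarrow> k \<noteq> i \<Longrightarrow> (\<Sum>z\<in>UNIV. (w i * zind (z i) + v i * (1 - zind (z i))) * zind (z k) * pmf D z) = 0"
proof -
  have "measure_pmf.expectation D (est w v (HANE_outcome (\<lambda>i. if i = j then 1 else 0) (\<lambda>_. 0) (\<lambda>_ _. 0)))
                      = ATE (HANE_outcome (\<lambda>i. if i = j then 1 else 0) (\<lambda>_. 0) (\<lambda>_ _. 0))"
    by (rule unbiased[rule_format]) simp
  then show "(\<Sum>z\<in>UNIV. (w j * zind (z j) + v j * (1 - zind (z j))) * pmf D z) = 0"
    by (simp add: exp_sum est_def HANE_outcome_def ATE_def if_distrib[where f="\<lambda>x. _ * x"] cong: if_cong)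
next
  have "measure_pmf.expectation D (est w v (HANE_outcome (\<lambda>_. 0) (\<lambda>i. if i = j then 1 else 0) (\<lambda>_ _. 0)))
                      = ATE (HANE_outcome (\<lambda>_. 0) (\<lambda>i. if i = j then 1 else 0) (\<lambda>_ _. 0))"
    by (rule unbiased[rule_format]) simp
  moreover have "\<And>z. est w v (HANE_outcome (\<lambda>_. 0) (\<lambda>i. if i = j then 1 else 0) (\<lambda>_ _. 0)) z = w j * zind (z j)"
  proof -
    fix z
    have "est w v (HANE_outcome (\<lambda>_. 0) (\<lambda>i. if i = j then 1 else 0) (\<lambda>_ _. 0)) z = (\<Sum>i\<in>UNIV. if i = j then w j * zind (z j) else 0)"
      unfolding est_def HANE_outcome_def by (intro sum.cong) (auto simp: zind_def)
    then show "est w v (HANE_outcome (\<lambda>_. 0) (\<lambda>i. if i = j then 1 else 0) (\<lambda>_ _. 0)) z = w j * zind (z j)" by simp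
  qed
  moreover have "ATE (HANE_outcome (\<lambda>_. 0) (\<lambda>i. if i = j then 1 else 0) (\<lambda>_ _. 0)) = 1 / real CARD('n)"
    unfolding ATE_def HANE_outcome_def
    by (simp add: if_distrib[where f="\<lambda>x. _ * x"] zind_def cong: if_cong)
  ultimately show "(\<Sum>z\<in>UNIV. w j * zind (z j) * pmf D z) = 1 / real CARD('n)"
    by (simp add: exp_sum)
next
  assume ki: "(k, i) \<in> \<E>" "k \<noteq> i"
  have "measure_pmf.expectation D (est w v (HANE_outcome (\<lambda>_. 0) (\<lambda>_. 0) (\<lambda>a b. if a = k \<and> b = i then 1 else 0)))
                      = ATE (HANE_outcome (\<lambda>_. 0) (\<lambda>_. 0) (\<lambda>a b. if a = k \<and> b = i then 1 else 0))"
    using ki by (intro unbiased[rule_format]) auto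
  then show "(\<Sum>z\<in>UNIV. (w i * zind (z i) + v i * (1 - zind (z i))) * zind (z k) * pmf D z) = 0"
  proof -
    have H: "\<And>m z. HANE_outcome (\<lambda>_. 0) (\<lambda>_. 0) (\<lambda>a b. if a = k \<and> b = i then 1 else 0) m z = (if m = i then zind (z k) else 0)"
    proof -
      fix m z
      have "HANE_outcome (\<lambda>_. 0) (\<lambda>_. 0) (\<lambda>a b. if a = k \<and> b = i then 1 else 0) m z
          = (\<Sum>a\<in>UNIV. if a = k then (if m = i then zind (z k) else 0) else 0)"
        unfolding HANE_outcome_def by (simp only: mult_zero_left add_0_left, intro sum.cong) auto
      then show "HANE_outcome (\<lambda>_. 0) (\<lambda>_. 0) (\<lambda>a b. if a = k \<and> b = i then 1 else 0) m z = (if m = i then zind (z k) else 0)"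
        by simp
    qed
    have E: "\<And>z. est w v (HANE_outcome (\<lambda>_. 0) (\<lambda>_. 0) (\<lambda>a b. if a = k \<and> b = i then 1 else 0)) z
       = (w i * zind (z i) + v i * (1 - zind (z i))) * zind (z k)"
    proof -
      fix z
      have "est w v (HANE_outcome (\<lambda>_. 0) (\<lambda>_. 0) (\<lambda>a b. if a = k \<and> b = i then 1 else 0)) z
       = (\<Sum>m\<in>UNIV. if m = i then (w i * zind (z i) + v i * (1 - zind (z i))) * zind (z k) else 0)"
        unfolding est_def H by (intro sum.cong) auto
      then show "est w v (HANE_outcome (\<lambda>_. 0) (\<lambda>_. 0) (\<lambda>a b. if a = k \<and> b = i then 1 else 0)) z
       = (w i * zind (z i) + v i * (1 - zind (z i))) * zind (z k)" by simp
    qed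
    have A: "ATE (HANE_outcome (\<lambda>_. 0) (\<lambda>_. 0) (\<lambda>a b. if a = k \<and> b = i then 1 else 0)) = 0"
      unfolding ATE_def H using ki by (simp add: zind_def sum_subtractf[symmetric] if_distrib[symmetric] cong: if_cong)
    show ?thesis using \<open>measure_pmf.expectation D _ = _\<close> unfolding exp_sum E A by simp
  qed
qed
theorem theorem3:
  fixes D :: "('n::finite \<Rightarrow> bool) pmf"
    and \<E> :: "('n \<times> 'n) set"
    and w v :: "'n \<Rightarrow> real"
  assumes edges: "\<forall>(k, i)\<in>\<E>. k \<noteq> i"
    and design: "\<forall>i. 0 < measure_pmf.expectation D (\<lambda>z. zind (z i))
                    \<and> measure_pmf.expectation D (\<lambda>z. zind (z i)) < 1"
    and unbiased: "\<forall>\<alpha> \<beta> (\<gamma> :: 'n \<Rightarrow> 'n \<Rightarrow> real).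
                    (\<forall>k i. (k, i) \<notin> \<E> \<longrightarrow> \<gamma> k i = 0) \<longrightarrow>
                    measure_pmf.expectation D (est w v (HANE_outcome \<alpha> \<beta> \<gamma>))
                      = ATE (HANE_outcome \<alpha> \<beta> \<gamma>)"
  shows "(\<forall>i. w i = 1 / (real CARD('n) * measure_pmf.expectation D (\<lambda>z. zind (z i)))
            \<and> v i = - 1 / (real CARD('n) * measure_pmf.expectation D (\<lambda>z. 1 - zind (z i))))
         \<and> (\<forall>(k, i)\<in>\<E>. prob_space.indep_var (measure_pmf D)
                (count_space UNIV) (\<lambda>z. z k) (count_space UNIV) (\<lambda>z. z i))"
proof -
  define f where "f = pmf D"
  define p where "p j = (\<Sum>z\<in>UNIV. zind (z j) * f z)" for j
  define n where "n = real CARD('n)"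
  have n0: "n > 0" unfolding n_def by simp
  have S1: "(\<Sum>z\<in>UNIV. f z) = 1" unfolding f_def by (rule sum_pmf_eq_1) auto
  have Ep: "measure_pmf.expectation D (\<lambda>z. zind (z j)) = p j" for j
    unfolding exp_sum p_def f_def ..
  have Eq: "measure_pmf.expectation D (\<lambda>z. 1 - zind (z j)) = 1 - p j" for j
    unfolding exp_sum p_def f_def[symmetric] using S1
    by (simp add: algebra_simps sum_subtractf)
  have p01: "0 < p j" "p j < 1" for j using design Ep by auto
  have wv: "w j = 1 / (n * p j) \<and> v j = - 1 / (n * (1 - p j))" for j
  proof -
    have a: "w j * p j = 1 / n"
      using test(2)[OF unbiased, of j] unfolding p_def f_def n_def
      by (simp add: sum_distrib_left mult.assoc)
    have b0: "(\<Sum>z\<in>UNIV. (w j * zind (z j) + v j * (1 - zind (z j))) * f z) = w j * p j + v j * (1 - p j)"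
    proof -
      have "(\<Sum>z\<in>UNIV. (w j * zind (z j) + v j * (1 - zind (z j))) * f z)
          = (\<Sum>z\<in>UNIV. w j * (zind (z j) * f z) + v j * f z - v j * (zind (z j) * f z))"
        by (rule sum.cong) (auto simp: algebra_simps)
      also have "\<dots> = w j * p j + v j * (\<Sum>z\<in>UNIV. f z) - v j * p j"
        by (simp add: sum.distrib sum_subtractf sum_distrib_left p_def)
      finally show ?thesis using S1 by (simp add: algebra_simps)
    qed
    have b: "w j * p j + v j * (1 - p j) = 0"
      using test(1)[OF unbiased, of j] b0 unfolding f_def by simp
    have wj: "w j = 1 / (n * p j)" using a p01[of j] n0 by (simp add: field_simps)
    have "v j * (1 - p j) = - 1 / n" using a b by linarith
    then have "v j = - 1 / (n * (1 - p j))" using p01[of j] n0 by (simp add: field_simps)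
    with wj show ?thesis by simp
  qed
  have indep: "prob_space.indep_var (measure_pmf D) (count_space UNIV) (\<lambda>z. z k) (count_space UNIV) (\<lambda>z. z i)"
    if ki: "(k, i) \<in> \<E>" for k i
  proof -
    have kni: "k \<noteq> i" using edges ki by auto
    define q where "q = (\<Sum>z\<in>UNIV. zind (z k) * zind (z i) * f z)"
    have c0: "(\<Sum>z\<in>UNIV. (w i * zind (z i) + v i * (1 - zind (z i))) * zind (z k) * f z) = w i * q + v i * (p k - q)"
    proof -
      have "(\<Sum>z\<in>UNIV. (w i * zind (z i) + v i * (1 - zind (z i))) * zind (z k) * f z)
          = (\<Sum>z\<in>UNIV. w i * (zind (z k) * zind (z i) * f z) + v i * (zind (z k) * f z) - v i * (zind (z k) * zind (z i) * f z))"
        by (rule sum.cong) (auto simp: algebra_simps)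
      also have "\<dots> = w i * q + v i * p k - v i * q"
        by (simp add: sum.distrib sum_subtractf sum_distrib_left p_def q_def)
      finally show ?thesis by (simp add: algebra_simps)
    qed
    have c: "w i * q + v i * (p k - q) = 0"
      using test(3)[OF unbiased ki kni] c0 unfolding f_def by simp
    have q: "q = p k * p i"
    proof -
      have "q / (n * p i) - (p k - q) / (n * (1 - p i)) = 0" using c wv[of i] by simp
      with p01[of i] n0 show ?thesis by (simp add: field_simps)
    qed
    show ?thesis unfolding prob_space.indep_var_eq[OF measure_pmf.prob_space_axioms]
    proof (intro conjI prob_space.indep_set_sigma_sets[OF measure_pmf.prob_space_axioms])
      show "(\<lambda>z. z k) \<in> measurable (measure_pmf D) (count_space UNIV)" by (auto simp: measurable_def)
      show "(\<lambda>z. z i) \<in> measurable (measure_pmf D) (count_space UNIV)" by (auto simp: measurable_def)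
      show "Int_stable {(\<lambda>z. z k) -` A \<inter> space (measure_pmf D) |A. A \<in> sets (count_space UNIV)}"
        by (safe intro!: Int_stableI) (intro exI[of _ "_ \<inter> _"], auto)
      show "Int_stable {(\<lambda>z. z i) -` A \<inter> space (measure_pmf D) |A. A \<in> sets (count_space UNIV)}"
        by (safe intro!: Int_stableI) (intro exI[of _ "_ \<inter> _"], auto)
      show "prob_space.indep_set (measure_pmf D) {(\<lambda>z. z k) -` A \<inter> space (measure_pmf D) |A. A \<in> sets (count_space UNIV)}
                        {(\<lambda>z. z i) -` A \<inter> space (measure_pmf D) |A. A \<in> sets (count_space UNIV)}"
      proof (safe intro!: prob_space.indep_setI[OF measure_pmf.prob_space_axioms])
        fix A B :: "bool set"
        have "measure_pmf.prob D ({z. z k \<in> A} \<inter> {z. z i \<in> B})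
          = (\<Sum>z\<in>UNIV. (of_bool (True \<in> A) * zind (z k) + of_bool (False \<in> A) * (1 - zind (z k)))
               * (of_bool (True \<in> B) * zind (z i) + of_bool (False \<in> B) * (1 - zind (z i))) * f z)"
          unfolding prob_sum f_def by (intro sum.cong refl) (simp add: ind_bool[symmetric])
        also have "\<dots> = (\<Sum>z\<in>UNIV. (of_bool (True \<in> A) * zind (z k) + of_bool (False \<in> A) * (1 - zind (z k))) * f z)
             * (\<Sum>z\<in>UNIV. (of_bool (True \<in> B) * zind (z i) + of_bool (False \<in> B) * (1 - zind (z i))) * f z)"
          by (rule lin_indep) (use S1 q in \<open>auto simp: q_def p_def\<close>)
        also have "\<dots> = measure_pmf.prob D {z. z k \<in> A} * measure_pmf.prob D {z. z i \<in> B}"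
          unfolding prob_sum f_def by (simp add: ind_bool[symmetric])
        finally show "measure_pmf.prob D ((\<lambda>z. z k) -` A \<inter> space (measure_pmf D) \<inter> ((\<lambda>z. z i) -` B \<inter> space (measure_pmf D))) =
          measure_pmf.prob D ((\<lambda>z. z k) -` A \<inter> space (measure_pmf D)) * measure_pmf.prob D ((\<lambda>z. z i) -` B \<inter> space (measure_pmf D))"
          by (simp add: vimage_def)
      qed auto
    qed
  qed
  show ?thesis using wv indep by (auto simp: Ep Eq n_def)
qed
end
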